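(* Assume the setting in the context with $\epsilon \in (0,1)$, $\delta = \bigl(1 + \frac{k+3}{2\epsilon}\bigr)^{-1}$, $S_{\mathrm{init}} = \{e^*\}$ where $e^* \in \arg\max_{e \in \mathcal{G}} f(\{e\})$, and $\alpha = f(S_{\mathrm{init}})\,\delta / n$ (assume $f(S_{\mathrm{init}}) > 0$). Let $S \in \mathcal{I}$ be locally optimal, i.e. $\sum_{a \in A} w_{(A,B)}(a)^2 \le \sum_{b \in B} w(b)^2$ for every $k$-replacement $(A,B)$ for $S$ (for an arbitrary total order $\prec$ used to define the weights), and let $O \in \arg\max_{X \in \mathcal{I}} f(X)$. Then \[ \Bigl(\frac{k+3}{2} + \epsilon\Bigr) f(S) \;\ge\; f(O). \]
   Context: Setting. $\mathcal{G}$ is a finite ground set with $|\mathcal{G}| = n$, and $f : 2^{\mathcal{G}} \to \mathbb{R}_{\ge 0}$ is a nonnegative monotone submodular function. $\mathcal{I} \subseteq 2^{\mathcal{G}}$ is a nonempty downward-closed family that is a $k$-exchange system ($k \ge 1$): for all $A, B \in \mathcal{I}$ there is a collection $\{Y_e \subseteq B \setminus A : e \in A \setminus B\}$ such that (K1) $|Y_e| \le k$ for each $e$; (K2) every $x \in B \setminus A$ lies in at most $k$ of the sets $Y_e$; (K3) for every $C \subseteq A \setminus B$, $(B \setminus \bigcup_{e \in C} Y_e) \cup C \in \mathcal{I}$. It is assumed that every singleton $\{e\}$, $e\in\mathcal{G}$, is in $\mathcal{I}$. Weights. Given $\alpha > 0$ and a total order $\prec$ on $\mathcal{G}$: for $S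 \in \mathcal{I}$ with elements $s_1 \prec \dots \prec s_m$ and $S_i = \{s_1,\dots,s_i\}$, define $w(s_i) = \lfloor (f(S_{i-1} \cup \{s_i\}) - f(S_{i-1}))/\alpha \rfloor \alpha$. A $k$-replacement for $S$ is a pair $(A,B)$ with $B \subseteq S$, $A \subseteq \mathcal{G} \setminus (S \setminus B)$, $|A| \le k$, $|B| \le k^2 - k + 1$, and $(S \setminus B) \cup A \in \mathcal{I}$. For such a pair, write $A = \{a_1 \prec \dots \prec a_r\}$, $A_i = \{a_1,\dots,a_i\}$, and define $w_{(A,B)}(a_i) = \lfloor (f((S\setminus B) \cup A_{i-1} \cup \{a_i\}) - f((S\setminus B)\cup A_{i-1}))/\alpha \rfloor \alpha$. *)

theory Defs
  imports Complex_Main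
begin

definition nonneg_monotone_submodular :: "'a set \<Rightarrow> ('a set \<Rightarrow> real) \<Rightarrow> bool" where
  "nonneg_monotone_submodular G f \<longleftrightarrow>
     (\<forall>X. X \<subseteq> G \<longrightarrow> 0 \<le> f X) \<and>
     (\<forall>X Y. X \<subseteq> Y \<and> Y \<subseteq> G \<longrightarrow> f X \<le> f Y) \<and>
     (\<forall>X Y. X \<subseteq> G \<and> Y \<subseteq> G \<longrightarrow> f (X \<union> Y) + f (X \<inter> Y) \<le> f X + f Y)"

definition k_exchange_system :: "'a set \<Rightarrow> 'a set set \<Rightarrow> nat \<Rightarrow> bool" where
  "k_exchange_system G I k \<longleftrightarrow>
     I \<subseteq> Pow G \<and> I \<noteq> {} \<and>
     (\<forall>X Y. X \<in> I \<and> Y \<subseteq> X \<longrightarrow> Y \<in> I) \<and>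
     (\<forall>A\<in>I. \<forall>B\<in>I. \<exists>Ys :: 'a \<Rightarrow> 'a set.
        (\<forall>e \<in> A - B. Ys e \<subseteq> B - A \<and> card (Ys e) \<le> k) \<and>
        (\<forall>x \<in> B - A. card {e \<in> A - B. x \<in> Ys e} \<le> k) \<and>
        (\<forall>C. C \<subseteq> A - B \<longrightarrow> (B - (\<Union>e\<in>C. Ys e)) \<union> C \<in> I))"

text \<open>Rounded marginal weight of element s in S w.r.t. strict order R (pairs (x,y) mean x \<prec> y):
  marginal gain of s over its predecessors in S, rounded down to a multiple of alpha.\<close>
definition rweight :: "('a set \<Rightarrow> real) \<Rightarrow> real \<Rightarrow> 'a rel \<Rightarrow> 'a set \<Rightarrow> 'a \<Rightarrow> real" where
  "rweight f \<alpha> R S s =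
     (let P = {x \<in> S. (x, s) \<in> R} in
      of_int \<lfloor>(f (P \<union> {s}) - f P) / \<alpha>\<rfloor> * \<alpha>)"

definition w_S :: "('a set \<Rightarrow> real) \<Rightarrow> real \<Rightarrow> 'a rel \<Rightarrow> 'a set \<Rightarrow> 'a \<Rightarrow> real" where
  "w_S f \<alpha> R S s = rweight f \<alpha> R S s"

definition w_repl :: "('a set \<Rightarrow> real) \<Rightarrow> real \<Rightarrow> 'a rel \<Rightarrow> 'a set \<Rightarrow> 'a set \<Rightarrow> 'a set \<Rightarrow> 'a \<Rightarrow> real" where
  "w_repl f \<alpha> R S A B a =
     (let P = (S - B) \<union> {x \<in> A. (x, a) \<in> R} in
      of_int \<lfloor>(f (P \<union> {a}) - f P) / \<alpha>\<rfloor> * \<alpha>)"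

definition k_replacement :: "'a set \<Rightarrow> 'a set set \<Rightarrow> nat \<Rightarrow> 'a set \<Rightarrow> 'a set \<Rightarrow> 'a set \<Rightarrow> bool" where
  "k_replacement G I k S A B \<longleftrightarrow>
     B \<subseteq> S \<and> A \<subseteq> G - (S - B) \<and> card A \<le> k \<and> card B \<le> k^2 - k + 1 \<and>
     (S - B) \<union> A \<in> I"

definition locally_optimal ::
  "'a set \<Rightarrow> 'a set set \<Rightarrow> nat \<Rightarrow> ('a set \<Rightarrow> real) \<Rightarrow> real \<Rightarrow> 'a rel \<Rightarrow> 'a set \<Rightarrow> bool" where
  "locally_optimal G I k f \<alpha> R S \<longleftrightarrow>
     (\<forall>A B. k_replacement G I k S A B \<longrightarrow>
        (\<Sum>a\<in>A. (w_repl f \<alpha> R S A B a)^2) \<le> (\<Sum>b\<in>B. (w_S f \<alpha> R S b)^2))"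

end

theory Submission
  imports Defs
begin

lemma has_max:
  assumes tr: "trans R" and irr: "\<forall>x. (x,x) \<notin> R" and fin: "finite T" and ne: "T \<noteq> {}"
  shows "\<exists>m\<in>T. \<forall>x\<in>T. (m,x) \<notin> R"
  using fin ne
proof (induction T rule: finite_ne_induct)
  case (singleton x) then show ?case using irr by auto
next
  case (insert x F)
  then obtain m where m: "m \<in> F" "\<forall>y\<in>F. (m,y) \<notin> R" by auto
  show ?case
  proof (cases "(m,x) \<in> R")
    case True
    have "\<forall>y\<in>insert x F. (x,y) \<notin> R"
      using True m tr irr by (metis insertE transD)
    then show ?thesis by auto
  next
    case False then show ?thesis using m by auto
  qed
qed

lemma telescope:
  fixes f :: "'a set \<Rightarrow> real"
  assumes tr: "trans R" and irr: "\<forall>x. (x,x) \<notin> R"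
    and tot: "\<forall>x\<in>T. \<forall>y\<in>T. x \<noteq> y \<longrightarrow> (x,y) \<in> R \<or> (y,x) \<in> R"
    and fin: "finite T"
  shows "(\<Sum>t\<in>T. f (X \<union> {x\<in>T. (x,t)\<in>R} \<union> {t}) - f (X \<union> {x\<in>T. (x,t)\<in>R})) = f (X \<union> T) - f X"
  using tot fin
proof (induction "card T" arbitrary: T)
  case 0
  then show ?case by simp
next
  case (Suc n)
  then have ne: "T \<noteq> {}" by auto
  obtain m where m: "m \<in> T" "\<forall>x\<in>T. (m,x) \<notin> R" using has_max[OF tr irr Suc.prems(2) ne] by blast
  define T' where "T' = T - {m}"
  have cT': "n = card T'" using Suc.hyps(2) m(1) T'_def Suc.prems(2) by simp
  have finT': "finite T'" using T'_def Suc.prems(2) by simp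
  have totT': "\<forall>x\<in>T'. \<forall>y\<in>T'. x \<noteq> y \<longrightarrow> (x,y) \<in> R \<or> (y,x) \<in> R"
    using Suc.prems(1) T'_def by auto
  have IH: "(\<Sum>t\<in>T'. f (X \<union> {x\<in>T'. (x,t)\<in>R} \<union> {t}) - f (X \<union> {x\<in>T'. (x,t)\<in>R})) = f (X \<union> T') - f X"
    using Suc.hyps(1)[OF cT' totT' finT'] .
  have e1: "\<And>t. t \<in> T' \<Longrightarrow> {x\<in>T. (x,t)\<in>R} = {x\<in>T'. (x,t)\<in>R}"
    using m T'_def by auto
  have e2: "{x\<in>T. (x,m)\<in>R} = T'"
  proof
    show "{x\<in>T. (x,m)\<in>R} \<subseteq> T'" using irr T'_def by auto
    show "T' \<subseteq> {x\<in>T. (x,m)\<in>R}" using Suc.prems(1) m T'_def by auto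
  qed
  have TT: "T = insert m T'" using m T'_def by auto
  have "(\<Sum>t\<in>T. f (X \<union> {x\<in>T. (x,t)\<in>R} \<union> {t}) - f (X \<union> {x\<in>T. (x,t)\<in>R}))
      = (f (X \<union> T' \<union> {m}) - f (X \<union> T')) + (\<Sum>t\<in>T'. f (X \<union> {x\<in>T. (x,t)\<in>R} \<union> {t}) - f (X \<union> {x\<in>T. (x,t)\<in>R}))"
    using e2 finT' T'_def by (subst TT, subst sum.insert) auto
  also have "(\<Sum>t\<in>T'. f (X \<union> {x\<in>T. (x,t)\<in>R} \<union> {t}) - f (X \<union> {x\<in>T. (x,t)\<in>R}))
      = (\<Sum>t\<in>T'. f (X \<union> {x\<in>T'. (x,t)\<in>R} \<union> {t}) - f (X \<union> {x\<in>T'. (x,t)\<in>R}))"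
    using e1 by (intro sum.cong) auto
  also have "X \<union> T' \<union> {m} = X \<union> T" using TT by auto
  finally show ?case using IH by simp
qed

lemma submod_marg:
  assumes f: "nonneg_monotone_submodular G f" and "X \<subseteq> Y" "Y \<subseteq> G" "e \<in> G"
  shows "f (Y \<union> {e}) - f Y \<le> f (X \<union> {e}) - f X"
proof (cases "e \<in> Y")
  case True
  then have "Y \<union> {e} = Y" by auto
  moreover have "f X \<le> f (X \<union> {e})" using f assms unfolding nonneg_monotone_submodular_def
    by (metis Un_least Un_upper1 empty_subsetI insert_subset order_trans)
  ultimately show ?thesis by simp
next
  case False
  have "X \<union> {e} \<subseteq> G" using assms by auto
  then have "f ((X \<union> {e}) \<union> Y) + f ((X \<union> {e}) \<inter> Y) \<le> f (X \<union> {e}) + f Y"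
    using f assms unfolding nonneg_monotone_submodular_def by blast
  moreover have "(X \<union> {e}) \<union> Y = Y \<union> {e}" "(X \<union> {e}) \<inter> Y = X" using False assms by auto
  ultimately show ?thesis by simp
qed

lemma floor_le: "(\<alpha>::real) > 0 \<Longrightarrow> of_int \<lfloor>p/\<alpha>\<rfloor> * \<alpha> \<le> p"
proof -
  assume a: "\<alpha> > 0"
  have "of_int \<lfloor>p/\<alpha>\<rfloor> \<le> p/\<alpha>" by simp
  then have "of_int \<lfloor>p/\<alpha>\<rfloor> * \<alpha> \<le> p/\<alpha> * \<alpha>" using a by (intro mult_right_mono) auto
  moreover have "p/\<alpha> * \<alpha> = p" using a by simp
  ultimately show ?thesis by linarith
qed

lemma floor_gt: "(\<alpha>::real) > 0 \<Longrightarrow> of_int \<lfloor>p/\<alpha>\<rfloor> * \<alpha> \<ge> p - \<alpha>"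
proof -
  assume a: "\<alpha> > 0"
  have "p/\<alpha> - 1 \<le> of_int \<lfloor>p/\<alpha>\<rfloor>" by linarith
  then have "(p/\<alpha> - 1) * \<alpha> \<le> of_int \<lfloor>p/\<alpha>\<rfloor> * \<alpha>" using a by (simp add: mult_right_mono)
  then show ?thesis using a by (simp add: algebra_simps)
qed

lemma floor_mono': "(\<alpha>::real) > 0 \<Longrightarrow> p \<le> q \<Longrightarrow> of_int \<lfloor>p/\<alpha>\<rfloor> * \<alpha> \<le> of_int \<lfloor>q/\<alpha>\<rfloor> * \<alpha>"
  by (simp add: divide_right_mono floor_mono)

lemma floor_nonneg': "(\<alpha>::real) > 0 \<Longrightarrow> 0 \<le> p \<Longrightarrow> 0 \<le> of_int \<lfloor>p/\<alpha>\<rfloor> * \<alpha>"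
  by simp

lemma sum_Un_le_nonneg:
  fixes h :: "'a \<Rightarrow> real"
  assumes "finite A" "finite B" "\<forall>x. h x \<ge> 0"
  shows "sum h (A \<union> B) \<le> sum h A + sum h B"
  using sum_Un[OF assms(1,2), of h] sum_nonneg[of "A \<inter> B" h] assms(3) by simp

lemma sum_UN_le_nonneg:
  fixes h :: "'a \<Rightarrow> real"
  assumes "finite J" "\<forall>i\<in>J. finite (A i)" "\<forall>x. h x \<ge> 0"
  shows "sum h (\<Union>i\<in>J. A i) \<le> (\<Sum>i\<in>J. sum h (A i))"
  using assms
proof (induction J rule: finite_induct)
  case empty then show ?case by simp
next
  case (insert j J)
  have "sum h (\<Union>i\<in>insert j J. A i) = sum h (A j \<union> (\<Union>i\<in>J. A i))" by simp
  also have "\<dots> \<le> sum h (A j) + sum h (\<Union>i\<in>J. A i)"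
    using insert by (intro sum_Un_le_nonneg) auto
  also have "\<dots> \<le> sum h (A j) + (\<Sum>i\<in>J. sum h (A i))" using insert by auto
  finally show ?case using insert by simp
qed


theorem mainTheorem4:
  fixes G :: "'a set" and I :: "'a set set" and f :: "'a set \<Rightarrow> real" and k :: nat
    and \<epsilon> \<delta> \<alpha> :: real and R :: "'a rel" and e_star :: 'a and S Opt :: "'a set"
  assumes finG: "finite G"
    and f: "nonneg_monotone_submodular G f"
    and k: "k \<ge> 1"
    and kex: "k_exchange_system G I k"
    and singletons: "\<forall>e\<in>G. {e} \<in> I"
    and eps: "0 < \<epsilon>" "\<epsilon> < 1"
    and delta: "\<delta> = 1 / (1 + (real k + 3) / (2 * \<epsilon>))"
    and estar: "e_star \<in> G" "\<forall>e\<in>G. f {e} \<le> f {e_star}"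
    and fpos: "f {e_star} > 0"
    and alpha: "\<alpha> = f {e_star} * \<delta> / real (card G)"
    and order: "strict_linear_order_on G R"
    and SI: "S \<in> I"
    and locopt: "locally_optimal G I k f \<alpha> R S"
    and OI: "Opt \<in> I" and Omax: "\<forall>X\<in>I. f X \<le> f Opt"
  shows "((real k + 3) / 2 + \<epsilon>) * f S \<ge> f Opt"
proof -
  have fnn: "\<forall>X. X \<subseteq> G \<longrightarrow> 0 \<le> f X" and fmono: "\<forall>X Y. X \<subseteq> Y \<and> Y \<subseteq> G \<longrightarrow> f X \<le> f Y"
    using f unfolding nonneg_monotone_submodular_def by auto
  have tr: "trans R" and irr: "\<forall>x. (x,x) \<notin> R" and tot: "\<forall>x\<in>G. \<forall>y\<in>G. x \<noteq> y \<longrightarrow> (x,y)\<in>R \<or> (y,x)\<in>R"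
    using order unfolding strict_linear_order_on_def irrefl_def total_on_def by auto
  have IG: "I \<subseteq> Pow G"
    and exch: "\<forall>A\<in>I. \<forall>B\<in>I. \<exists>Ys :: 'a \<Rightarrow> 'a set.
        (\<forall>e \<in> A - B. Ys e \<subseteq> B - A \<and> card (Ys e) \<le> k) \<and>
        (\<forall>x \<in> B - A. card {e \<in> A - B. x \<in> Ys e} \<le> k) \<and>
        (\<forall>C. C \<subseteq> A - B \<longrightarrow> (B - (\<Union>e\<in>C. Ys e)) \<union> C \<in> I)"
    using kex unfolding k_exchange_system_def by auto
  have SG: "S \<subseteq> G" and OG: "Opt \<subseteq> G" using IG SI OI by auto
  from bspec[OF bspec[OF exch OI] SI] obtain Ys where Yall: "(\<forall>e\<in>Opt - S. Ys e \<subseteq> S - Opt \<and> card (Ys e) \<le> k) \<and>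
     (\<forall>x\<in>S - Opt. card {e\<in>Opt - S. x \<in> Ys e} \<le> k) \<and>
     (\<forall>C. C \<subseteq> Opt - S \<longrightarrow> (S - (\<Union>e\<in>C. Ys e)) \<union> C \<in> I)"
    by (rule exE)
  have Y1: "\<forall>e\<in>Opt - S. Ys e \<subseteq> S - Opt \<and> card (Ys e) \<le> k"
    using Yall by (rule conjunct1)
  have Y2: "\<forall>x\<in>S - Opt. card {e\<in>Opt - S. x \<in> Ys e} \<le> k"
    using conjunct2[OF Yall] by (rule conjunct1)
  have Y3: "\<forall>C. C \<subseteq> Opt - S \<longrightarrow> (S - (\<Union>e\<in>C. Ys e)) \<union> C \<in> I"
    using conjunct2[OF Yall] by (rule conjunct2)
  have finS: "finite S" and finO: "finite Opt" using SG OG finG finite_subset by auto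
  have cardpos: "card G > 0" using finG estar by (auto simp: card_gt_0_iff)
  have dpos: "\<delta> > 0" using delta eps by (simp add: add_pos_pos)
  have apos: "\<alpha> > 0" using alpha dpos fpos cardpos by simp
  define w where "w = w_S f \<alpha> R S"
  define marg where "marg s = f ({x\<in>S. (x,s)\<in>R} \<union> {s}) - f {x\<in>S. (x,s)\<in>R}" for s
  have w_eq: "w s = of_int \<lfloor>marg s/\<alpha>\<rfloor> * \<alpha>" for s
    unfolding w_def w_S_def rweight_def Let_def marg_def by simp
  have margnn: "0 \<le> marg s" if "s \<in> S" for s
    using that SG unfolding marg_def by (auto intro!: fmono[rule_format])
  have wnn: "0 \<le> w s" if "s \<in> S" for s
    using w_eq margnn[OF that] apos by simp
  have wle: "w s \<le> marg s" for s using w_eq floor_le[OF apos] by simp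
  have tel1: "(\<Sum>s\<in>S. marg s) = f S - f {}"
  proof -
    have totS: "\<forall>x\<in>S. \<forall>y\<in>S. x \<noteq> y \<longrightarrow> (x,y)\<in>R \<or> (y,x)\<in>R" using tot SG by blast
    show ?thesis using telescope[OF tr irr totS finS, where X="{}" and f=f] unfolding marg_def by simp
  qed
  have sumw: "sum w S \<le> f S"
  proof -
    have "sum w S \<le> sum marg S" using wle by (simp add: sum_mono)
    moreover have "0 \<le> f {}" using fnn by auto
    ultimately show ?thesis using tel1 by simp
  qed
  define O' where "O' = Opt - S"
  have O'G: "O' \<subseteq> G" and finO': "finite O'" using OG finO O'_def by auto
  define v where "v q = f ((S \<union> {x\<in>O'. (x,q)\<in>R}) \<union> {q}) - f (S \<union> {x\<in>O'. (x,q)\<in>R})" for q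
  define xp where "xp q = of_int \<lfloor>v q/\<alpha>\<rfloor> * \<alpha>" for q
  have tel2: "sum v O' = f (S \<union> O') - f S"
  proof -
    have totO: "\<forall>x\<in>O'. \<forall>y\<in>O'. x \<noteq> y \<longrightarrow> (x,y)\<in>R \<or> (y,x)\<in>R" using tot O'G by blast
    show ?thesis using telescope[OF tr irr totO finO', where X=S and f=f] unfolding v_def by simp
  qed
  have xpv: "xp q \<ge> v q - \<alpha>" for q unfolding xp_def using floor_gt[OF apos] .
  have xp_le: "xp a \<le> w_repl f \<alpha> R S A B a" if "A \<subseteq> O'" "a \<in> A" for A B a
  proof -
    define P where "P = (S - B) \<union> {x\<in>A. (x,a)\<in>R}"
    define Q where "Q = S \<union> {x\<in>O'. (x,a)\<in>R}"
    have "P \<subseteq> Q" using that unfolding P_def Q_def by auto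
    moreover have "Q \<subseteq> G" using SG O'G unfolding Q_def by auto
    moreover have "a \<in> G" using that O'G by auto
    ultimately have "f (Q \<union> {a}) - f Q \<le> f (P \<union> {a}) - f P" using submod_marg[OF f] by blast
    then have "v a \<le> f (P \<union> {a}) - f P" unfolding v_def Q_def .
    then show ?thesis unfolding xp_def w_repl_def Let_def P_def[symmetric]
      using floor_mono'[OF apos] by blast
  qed
  have empty_case: "xp q \<le> 0" if "q \<in> O'" "Ys q = {}" for q
  proof -
    have "(S - (\<Union>e\<in>{q}. Ys e)) \<union> {q} \<in> I" using Y3 that O'_def by auto
    then have "(S - {}) \<union> {q} \<in> I" using that by simp
    moreover have "card {q} \<le> k" using k by simp
    moreover have "{q} \<subseteq> G - (S - {})" using that O'_def O'G by auto
    ultimately have "k_replacement G I k S {q} {}" unfolding k_replacement_def by auto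
    then have "(\<Sum>a\<in>{q}. (w_repl f \<alpha> R S {q} {} a)^2) \<le> (\<Sum>b\<in>{}. (w_S f \<alpha> R S b)^2)"
      using locopt unfolding locally_optimal_def by blast
    then have "(w_repl f \<alpha> R S {q} {} q)^2 \<le> 0" by simp
    then have "w_repl f \<alpha> R S {q} {} q = 0" by (metis power2_less_eq_zero_iff)
    moreover have "xp q \<le> w_repl f \<alpha> R S {q} {} q" using xp_le[of "{q}" q] that by auto
    ultimately show ?thesis by simp
  qed
  have YS: "Ys q \<subseteq> S - Opt" if "q \<in> O'" for q using Y1 that O'_def by auto
  have finY: "finite (Ys q)" if "q \<in> O'" for q using YS[OF that] finS finite_subset by blast
  have "\<forall>q. \<exists>u. q \<in> O' \<and> Ys q \<noteq> {} \<longrightarrow> u \<in> Ys q \<and> (\<forall>u'\<in>Ys q. w u' \<le> w u)"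
  proof
    fix q
    show "\<exists>u. q \<in> O' \<and> Ys q \<noteq> {} \<longrightarrow> u \<in> Ys q \<and> (\<forall>u'\<in>Ys q. w u' \<le> w u)"
    proof (cases "q \<in> O' \<and> Ys q \<noteq> {}")
      case True
      then have fY: "finite (w ` Ys q)" "w ` Ys q \<noteq> {}" using finY by auto
      obtain u where "u \<in> Ys q" "w u = Max (w ` Ys q)" using Max_in[OF fY] by auto
      then show ?thesis using Max_ge[OF fY(1)] by auto
    qed auto
  qed
  then obtain nf where nf: "\<And>q. q \<in> O' \<Longrightarrow> Ys q \<noteq> {} \<Longrightarrow> nf q \<in> Ys q \<and> (\<forall>u'\<in>Ys q. w u' \<le> w (nf q))"
    by metis
  define O1 where "O1 = {q\<in>O'. Ys q \<noteq> {}}"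
  define T where "T s = {q\<in>O1. nf q = s}" for s
  define g where "g q = xp q - (\<Sum>u\<in>Ys q. w u)/2" for q
  have claw: "sum g (T s) \<le> w s / 2" if s: "s \<in> S - Opt" for s
  proof -
    define Tq where "Tq = T s"
    define B where "B = (\<Union>q\<in>Tq. Ys q)"
    have TO: "Tq \<subseteq> O'" unfolding Tq_def T_def O1_def by auto
    have sY: "s \<in> Ys q" if "q \<in> Tq" for q
      using that nf unfolding Tq_def T_def O1_def by auto
    have maxw: "w u \<le> w s" if "q \<in> Tq" "u \<in> Ys q" for q u
      using that nf unfolding Tq_def T_def O1_def by auto
    have finT: "finite Tq" using TO finO' finite_subset by blast
    have BS: "B \<subseteq> S - Opt" using TO YS unfolding B_def by blast
    have cardT: "card Tq \<le> k"
    proof -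
      have "Tq \<subseteq> {e\<in>Opt - S. s \<in> Ys e}" using TO sY O'_def by auto
      moreover have "finite {e\<in>Opt - S. s \<in> Ys e}" using finO by auto
      ultimately have "card Tq \<le> card {e\<in>Opt - S. s \<in> Ys e}" by (rule card_mono[rotated])
      then show ?thesis using Y2 s by (meson le_trans)
    qed
    define U where "U = (\<Union>q\<in>Tq. Ys q - {s})"
    have finU: "finite U" using finT finY TO unfolding U_def by auto
    have BU: "B \<subseteq> insert s U" unfolding B_def U_def by auto
    have cardB: "card B \<le> k^2 - k + 1"
    proof -
      have "card B \<le> card (insert s U)" using BU finU by (intro card_mono) auto
      also have "\<dots> \<le> card U + 1" using finU by (simp add: card_insert_if)
      also have "card U \<le> (\<Sum>q\<in>Tq. card (Ys q - {s}))" unfolding U_def using finT by (rule card_UN_le)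
      also have "\<dots> \<le> (\<Sum>q\<in>Tq. k - 1)"
      proof (rule sum_mono)
        fix q assume q: "q \<in> Tq"
        have "card (Ys q - {s}) = card (Ys q) - 1" using sY[OF q] finY q TO by auto
        moreover have "card (Ys q) \<le> k" using Y1 q TO O'_def by auto
        ultimately show "card (Ys q - {s}) \<le> k - 1" by simp
      qed
      also have "\<dots> = card Tq * (k - 1)" by simp
      also have "\<dots> \<le> k * (k - 1)" using cardT by simp
      finally have "card B \<le> k * (k - 1) + 1" by simp
      moreover have "k * (k - 1) = k^2 - k" by (simp add: power2_eq_square diff_mult_distrib2)
      ultimately show ?thesis by simp
    qed
    have repl: "k_replacement G I k S Tq B"
    proof -
      have "(S - (\<Union>e\<in>Tq. Ys e)) \<union> Tq \<in> I" using Y3 TO O'_def by auto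
      then have "(S - B) \<union> Tq \<in> I" unfolding B_def .
      moreover have "B \<subseteq> S" using BS by auto
      moreover have "Tq \<subseteq> G - (S - B)" using TO O'G O'_def by auto
      ultimately show ?thesis unfolding k_replacement_def using cardT cardB by auto
    qed
    define wr where "wr a = w_repl f \<alpha> R S Tq B a" for a
    have LO: "(\<Sum>a\<in>Tq. (wr a)^2) \<le> (\<Sum>b\<in>B. (w b)^2)"
      using locopt repl unfolding locally_optimal_def wr_def w_def by blast
    define r where "r q = (\<Sum>u\<in>Ys q - {s}. w u)" for q
    have sq: "(\<Sum>b\<in>B. (w b)^2) \<le> (w s)^2 + (\<Sum>q\<in>Tq. \<Sum>u\<in>Ys q - {s}. (w u)^2)"
    proof -
      have "(\<Sum>b\<in>B. (w b)^2) \<le> (\<Sum>b\<in>insert s U. (w b)^2)"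
        using BU finU by (intro sum_mono2) auto
      also have "\<dots> \<le> (\<Sum>b\<in>{s}. (w b)^2) + (\<Sum>b\<in>U. (w b)^2)"
        using sum_Un_le_nonneg[of "{s}" U "\<lambda>b. (w b)^2"] finU by simp
      also have "(\<Sum>b\<in>U. (w b)^2) \<le> (\<Sum>q\<in>Tq. \<Sum>u\<in>Ys q - {s}. (w u)^2)"
        unfolding U_def using finT finY TO by (intro sum_UN_le_nonneg) auto
      finally show ?thesis by simp
    qed
    have sq2: "(\<Sum>u\<in>Ys q - {s}. (w u)^2) \<le> w s * r q" if q: "q \<in> Tq" for q
    proof -
      have "(\<Sum>u\<in>Ys q - {s}. (w u)^2) \<le> (\<Sum>u\<in>Ys q - {s}. w s * w u)"
      proof (rule sum_mono)
        fix u assume u: "u \<in> Ys q - {s}"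
        have "u \<in> S" using u YS q TO by auto
        then have "0 \<le> w u" "w u \<le> w s" using wnn maxw q u by auto
        then show "(w u)^2 \<le> w s * w u" by (simp add: power2_eq_square mult_right_mono)
      qed
      then show ?thesis unfolding r_def by (simp add: sum_distrib_left)
    qed
    have LO': "(\<Sum>a\<in>Tq. (wr a)^2) \<le> (w s)^2 + w s * sum r Tq"
    proof -
      have "(\<Sum>q\<in>Tq. \<Sum>u\<in>Ys q - {s}. (w u)^2) \<le> (\<Sum>q\<in>Tq. w s * r q)"
        using sq2 by (intro sum_mono) auto
      then show ?thesis using LO sq by (simp add: sum_distrib_left)
    qed
    have ysum: "(\<Sum>u\<in>Ys q. w u) = w s + r q" if q: "q \<in> Tq" for q
      unfolding r_def using sum.remove[of "Ys q" s w] finY sY q TO by auto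
    have xpwr: "xp q \<le> wr q" if "q \<in> Tq" for q
      unfolding wr_def using xp_le[OF TO that] .
    have wsnn: "0 \<le> w s" using wnn s by auto
    show "sum g (T s) \<le> w s / 2"
    proof (cases "w s = 0")
      case True
      have r0: "r q = 0" if q: "q \<in> Tq" for q
      proof -
        have "\<forall>u\<in>Ys q - {s}. w u = 0"
        proof
          fix u assume u: "u \<in> Ys q - {s}"
          have "u \<in> S" using u YS q TO by auto
          then show "w u = 0" using wnn maxw q u True by force
        qed
        then show ?thesis unfolding r_def by simp
      qed
      have "sum g Tq \<le> 0"
      proof (rule sum_nonpos)
        fix q assume q: "q \<in> Tq"
        have "(wr q)^2 \<le> (\<Sum>a\<in>Tq. (wr a)^2)"
          using finT q by (intro member_le_sum) auto
        also have "\<dots> \<le> 0" using LO' True by simp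
        finally have "wr q = 0" by (metis power2_less_eq_zero_iff)
        then show "g q \<le> 0" unfolding g_def using xpwr[OF q] ysum[OF q] r0[OF q] True by simp
      qed
      then show ?thesis using True Tq_def by simp
    next
      case False
      then have wpos: "w s > 0" using wsnn by simp
      have pt: "2 * w s * xp q - (w s)^2 - w s * r q \<le> (wr q)^2 - w s * r q" if q: "q \<in> Tq" for q
      proof -
        have "w s * xp q \<le> w s * wr q" using xpwr[OF q] wsnn by (rule mult_left_mono)
        moreover have "0 \<le> (wr q - w s)^2" by simp
        ultimately show ?thesis by (simp add: power2_diff algebra_simps)
      qed
      have "(\<Sum>q\<in>Tq. 2 * w s * xp q - (w s)^2 - w s * r q) \<le> (\<Sum>q\<in>Tq. (wr q)^2 - w s * r q)"
        using pt by (intro sum_mono) auto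
      also have "\<dots> = (\<Sum>q\<in>Tq. (wr q)^2) - w s * sum r Tq"
        by (simp add: sum_subtractf sum_distrib_left)
      also have "\<dots> \<le> (w s)^2" using LO' by simp
      finally have h: "(\<Sum>q\<in>Tq. 2 * w s * xp q - (w s)^2 - w s * r q) \<le> (w s)^2" .
      have "(\<Sum>q\<in>Tq. 2 * w s * xp q - (w s)^2 - w s * r q) = (\<Sum>q\<in>Tq. (2 * w s) * g q)"
        using ysum unfolding g_def by (intro sum.cong) (auto simp: algebra_simps power2_eq_square)
      also have "\<dots> = (2 * w s) * sum g Tq" by (simp add: sum_distrib_left)
      finally have "w s * (2 * sum g Tq) \<le> w s * w s" using h by (simp add: power2_eq_square algebra_simps)
      then have "2 * sum g Tq \<le> w s" using wpos by simp
      then show ?thesis unfolding Tq_def by simp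
    qed
  qed
  have "sum g O1 = (\<Sum>s\<in>S - Opt. sum g (T s))"
  proof -
    have "nf ` O1 \<subseteq> S - Opt" using nf YS unfolding O1_def by blast
    moreover have "finite O1" using finO' O1_def by auto
    ultimately show ?thesis unfolding T_def using sum.group[of O1 "S - Opt" nf g] finS by simp
  qed
  also have "\<dots> \<le> (\<Sum>s\<in>S - Opt. w s / 2)" using claw by (intro sum_mono) auto
  finally have g1: "sum g O1 \<le> sum w (S - Opt) / 2" by (simp add: sum_divide_distrib)
  have g0: "sum g (O' - O1) \<le> 0"
  proof (rule sum_nonpos)
    fix q assume "q \<in> O' - O1"
    then show "g q \<le> 0" using empty_case unfolding g_def O1_def by auto
  qed
  have gsum: "sum g O' = sum g O1 + sum g (O' - O1)"
    using sum.subset_diff[of O1 O' g] finO' O1_def by auto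
  have D: "(\<Sum>q\<in>O'. \<Sum>u\<in>Ys q. w u) \<le> real k * sum w (S - Opt)"
  proof -
    have "(\<Sum>q\<in>O'. \<Sum>u\<in>Ys q. w u) = (\<Sum>q\<in>O'. \<Sum>u\<in>S - Opt. if u \<in> Ys q then w u else 0)"
    proof (rule sum.cong)
      fix q assume q: "q \<in> O'"
      have "{u\<in>S - Opt. u \<in> Ys q} = Ys q" using YS[OF q] by auto
      then show "(\<Sum>u\<in>Ys q. w u) = (\<Sum>u\<in>S - Opt. if u \<in> Ys q then w u else 0)"
        using sum.inter_filter[of "S - Opt" w "\<lambda>u. u \<in> Ys q"] finS by simp
    qed simp
    also have "\<dots> = (\<Sum>u\<in>S - Opt. \<Sum>q\<in>O'. if u \<in> Ys q then w u else 0)" by (rule sum.swap)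
    also have "\<dots> = (\<Sum>u\<in>S - Opt. w u * card {q\<in>O'. u \<in> Ys q})"
    proof (rule sum.cong)
      fix u assume "u \<in> S - Opt"
      show "(\<Sum>q\<in>O'. if u \<in> Ys q then w u else 0) = w u * card {q\<in>O'. u \<in> Ys q}"
        using sum.inter_filter[of O' "\<lambda>_. w u" "\<lambda>q. u \<in> Ys q"] finO' by (simp add: mult.commute)
    qed simp
    also have "\<dots> \<le> (\<Sum>u\<in>S - Opt. w u * k)"
    proof (rule sum_mono)
      fix u assume u: "u \<in> S - Opt"
      have "card {q\<in>O'. u \<in> Ys q} \<le> k" using Y2 u O'_def by auto
      then show "w u * card {q\<in>O'. u \<in> Ys q} \<le> w u * k"
        using wnn u by (intro mult_left_mono) auto
    qed
    finally show ?thesis by (simp add: sum_distrib_left mult.commute)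
  qed
  have xpsum: "sum xp O' = sum g O' + (\<Sum>q\<in>O'. \<Sum>u\<in>Ys q. w u) / 2"
    unfolding g_def by (simp add: sum_subtractf sum_divide_distrib)
  have W: "sum w (S - Opt) \<le> f S" "0 \<le> sum w (S - Opt)"
  proof -
    have "sum w (S - Opt) \<le> sum w S" using wnn finS by (intro sum_mono2) auto
    then show "sum w (S - Opt) \<le> f S" using sumw by simp
    show "0 \<le> sum w (S - Opt)" using wnn by (intro sum_nonneg) auto
  qed
  have up: "sum xp O' \<le> (real k + 1) / 2 * f S"
  proof -
    have "sum xp O' \<le> sum w (S - Opt) / 2 + real k * sum w (S - Opt) / 2"
      using xpsum gsum g0 g1 D by linarith
    also have "\<dots> = (real k + 1) / 2 * sum w (S - Opt)" by (simp add: field_simps)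
    also have "\<dots> \<le> (real k + 1) / 2 * f S" using W by (intro mult_left_mono) auto
    finally show ?thesis .
  qed
  have low: "sum xp O' \<ge> f (S \<union> O') - f S - real (card O') * \<alpha>"
  proof -
    have "sum xp O' \<ge> (\<Sum>q\<in>O'. v q - \<alpha>)" using xpv by (intro sum_mono) auto
    then show ?thesis using tel2 by (simp add: sum_subtractf)
  qed
  have "real (card O') * \<alpha> \<le> real (card G) * \<alpha>"
    using card_mono[OF finG O'G] apos by (intro mult_right_mono) auto
  also have "real (card G) * \<alpha> = f {e_star} * \<delta>" using alpha cardpos by simp
  also have "\<dots> \<le> f Opt * \<delta>" using Omax singletons estar dpos by (intro mult_right_mono) auto
  finally have err: "real (card O') * \<alpha> \<le> f Opt * \<delta>" .
  have "f Opt \<le> f (S \<union> O')" using fmono SG OG O'_def by (intro fmono[rule_format]) auto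
  then have key: "(1 - \<delta>) * f Opt \<le> (real k + 3) / 2 * f S"
    using up low err by (simp add: algebra_simps)
  define c where "c = (real k + 3) / 2"
  have cpos: "c > 0" unfolding c_def by simp
  have "1 - \<delta> = c / (c + \<epsilon>)" using eps unfolding delta c_def by (simp add: field_simps)
  then have h1: "c / (c + \<epsilon>) * f Opt \<le> c * f S" using key[folded c_def] by simp
  have cepos: "c + \<epsilon> > 0" using cpos eps by simp
  have "c / (c + \<epsilon>) * f Opt * (c + \<epsilon>) \<le> c * f S * (c + \<epsilon>)"
    using h1 cepos by (intro mult_right_mono) auto
  moreover have "c / (c + \<epsilon>) * f Opt * (c + \<epsilon>) = c * f Opt" using cepos by simp
  ultimately have "c * f Opt \<le> c * ((c + \<epsilon>) * f S)" by (simp add: algebra_simps)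
  then have "f Opt \<le> (c + \<epsilon>) * f S" using cpos by simp
  then show ?thesis unfolding c_def .
qed

end
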